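(* Let $S$ be a closed subset of $\mathbb{R}^d$, let $(\mathbb{X},d_{\mathbb{X}})$ be a metric space of extended real-valued functions on $S$, let $(\Xi,d_\Xi)$ be a metric space with Borel $\sigma$-algebra $\mathcal{B}(\Xi)$, and let $(\mathbb{P},d_{\mathbb{P}})$ be a metric space of probability measures on $(\Xi,\mathcal{B}(\Xi))$ such that $d_{\mathbb{P}}$ metrizes weak convergence. Let $f,f^\nu:\Xi\times\mathbb{X}\to\overline{\mathbb{R}}$, let $X,X^\nu\subset\mathbb{X}$, let $P,P^\nu\in\mathbb{P}$, and let $\theta^\nu\in[0,+\infty)$, $\nu\in\mathbb{N}$. Define on $\mathbb{X}\times\mathbb{P}$ (with the product topology) $$\phi(x,Q):=\mathbb{E}^Q\big[f(\xi,x)+\iota_X(x)\big]+\iota_{\{P\}}(Q),\qquad \phi^\nu(x,Q):=\mathbb{E}^Q\big[f^\nu(\xi,x)+\iota_{X^\nu}(x)\big]+\theta^\nu d_{\mathbb{P}}(Q,P^\nu).$$ Suppose that the sets $X^\nu$ are closed and set-converge to $X$, $\theta^\nu\to+\infty$, $\theta^\nu d_{\mathbb{P}}(P^\nu,P)\to0$, and for each $x\in\mathbb{X}$: (i) $f(\cdot,x)$ and $f^\nu(\cdot,x)$ are measurable for all $\nu$, and $f(\xi,x)>-\infty$ for all $\xi\in\Xi$; (ii) for every sequence $Q^\nu\in\mathbb{P}$ converging to $P$, $$\liminf_{K\to+\infty}\ \liminf_{(\nu,y)\to(+\infty,x)}\mathbb{E}^{Q^\nu}\Big[\big(f^\nu(\xi,y)+\iota_{X^\nu}(y)\big)\mathbb{1}\{\xi:f^\nu(\xi,y)+\iota_{X^\nu}(y)\le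 -K\}\Big]=0;$$ (iii) for $P$-a.e. $\xi\in\Xi$, $\liminf_{(\nu,y,\zeta)\to(+\infty,x,\xi)}f^\nu(\zeta,y)\ge f(\xi,x)$; (iv) for every sequence $x^\nu\in X^\nu$ converging to $x$ and every sequence $Q^\nu\in\mathbb{P}$ converging to some $Q\in\mathbb{P}$, $\liminf_{\nu\to+\infty}\mathbb{E}^{Q^\nu}[f^\nu(\xi,x^\nu)]>-\infty$; (v) for every sequence $x^\nu\in X^\nu$ converging to $x$, there exists a $P$-integrable function $g:\Xi\to[0,+\infty)$ such that for $P$-a.e. $\xi\in\Xi$, $f^\nu(\xi,x^\nu)\le g(\xi)$ for all $\nu\in\mathbb{N}$ and $f^\nu(\xi,x^\nu)\to f(\xi,x)$ as $\nu\to+\infty$. Then $\phi^\nu$ epi-converges to $\phi$ as functions on $\mathbb{X}\times\mathbb{P}$.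
   Context: $\overline{\mathbb{R}}=\mathbb{R}\cup\{-\infty,+\infty\}$. $\iota_C(x)=0$ if $x\in C$ and $+\infty$ otherwise. For a probability $\mu$ and measurable $\overline{\mathbb{R}}$-valued $g$, $\mathbb{E}^\mu[g]:=\int g_+\,d\mu-\int g_-\,d\mu$ with conventions $+\infty-\alpha=+\infty$ for all $\alpha\in\overline{\mathbb{R}}$ and $\beta-(+\infty)=-\infty$ for $\beta\in\mathbb{R}$. $\mathbb{1}\{B\}$ is the indicator. Sets $A^\nu$ set-converge to $A$ if both the outer limit (all limits of subsequences of points $a^\nu\in A^\nu$) and the inner limit (all limits of sequences $a^\nu\in A^\nu$) equal $A$. $\liminf_{(\nu,y)\to(+\infty,x)}a^\nu(y):=\lim_{\delta\downarrow0}\lim_{N\to\infty}\inf\{a^\nu(y):\nu\ge N, d_{\mathbb{X}}(y,x)<\delta\}$, and the three-variable version additionally requires $d_\Xi(\zeta,\xi)<\delta$. Epi-convergence of $\phi^\nu$ to $\phi$: for every point $z$, $\phi(z)\le\liminf\phi^\nu(z^\nu)$ for all $z^\nu\to z$, and some $z^\nu\to z$ has $\phi^\nu(z^\nu)\to\phi(z)$. *)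

theory Defs
  imports "HOL-Probability.Probability"
begin

definition seq_conv :: "('a \<Rightarrow> 'a \<Rightarrow> real) \<Rightarrow> (nat \<Rightarrow> 'a) \<Rightarrow> 'a \<Rightarrow> bool" where
  "seq_conv d xs x \<longleftrightarrow> (\<lambda>n. d (xs n) x) \<longlonglongrightarrow> 0"

definition iota :: "'a set \<Rightarrow> 'a \<Rightarrow> ereal" where
  "iota C x = (if x \<in> C then 0 else \<infinity>)"

text \<open>Extended expectation: int g_+ - int g_-, with +inf - a = +inf and b - (+inf) = -inf.\<close>
definition Eext :: "'a measure \<Rightarrow> ('a \<Rightarrow> ereal) \<Rightarrow> ereal" where
  "Eext \<mu> g =
     (let a = (\<integral>\<^sup>+ x. e2ennreal (g x) \<partial>\<mu>); b = (\<integral>\<^sup>+ x. e2ennreal (- g x) \<partial>\<mu>)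
      in if a = \<infinity> then \<infinity> else enn2ereal a - enn2ereal b)"

definition weak_conv :: "(nat \<Rightarrow> 'a::metric_space measure) \<Rightarrow> 'a measure \<Rightarrow> bool" where
  "weak_conv Qs Q \<longleftrightarrow>
     (\<forall>g::'a \<Rightarrow> real. continuous_on UNIV g \<and> bounded (range g) \<longrightarrow>
        (\<lambda>n. integral\<^sup>L (Qs n) g) \<longlonglongrightarrow> integral\<^sup>L Q g)"

definition outer_limit :: "'a set \<Rightarrow> ('a \<Rightarrow> 'a \<Rightarrow> real) \<Rightarrow> (nat \<Rightarrow> 'a set) \<Rightarrow> 'a set" where
  "outer_limit M d A = {z \<in> M. \<exists>r a. strict_mono r \<and> (\<forall>k. a k \<in> A (r k)) \<and> seq_conv d a z}"

definition inner_limit :: "'a set \<Rightarrow> ('a \<Rightarrow> 'a \<Rightarrow> real) \<Rightarrow> (nat \<Rightarrow> 'a set) \<Rightarrow> 'a set" where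
  "inner_limit M d A = {z \<in> M. \<exists>a. (\<forall>n. a n \<in> A n) \<and> seq_conv d a z}"

definition set_conv :: "'a set \<Rightarrow> ('a \<Rightarrow> 'a \<Rightarrow> real) \<Rightarrow> (nat \<Rightarrow> 'a set) \<Rightarrow> 'a set \<Rightarrow> bool" where
  "set_conv M d A B \<longleftrightarrow> outer_limit M d A = B \<and> inner_limit M d A = B"

text \<open>liminf_{(nu,y) -> (+inf,x)} a^nu(y)
  = lim_{delta -> 0} lim_{N -> inf} inf {a^nu(y) : nu >= N, d(y,x) < delta};
  both limits are of monotone families, hence are suprema.\<close>
definition liminf2 :: "'x set \<Rightarrow> ('x \<Rightarrow> 'x \<Rightarrow> real) \<Rightarrow> (nat \<Rightarrow> 'x \<Rightarrow> ereal) \<Rightarrow> 'x \<Rightarrow> ereal" where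
  "liminf2 M d a x =
     (SUP \<delta>\<in>{0<..}. SUP N. INF \<nu>\<in>{N..}. INF y\<in>{y\<in>M. d y x < \<delta>}. a \<nu> y)"

definition liminf3 :: "'x set \<Rightarrow> ('x \<Rightarrow> 'x \<Rightarrow> real) \<Rightarrow> (nat \<Rightarrow> 'z::metric_space \<Rightarrow> 'x \<Rightarrow> ereal)
     \<Rightarrow> 'x \<Rightarrow> 'z \<Rightarrow> ereal" where
  "liminf3 M d a x \<xi> =
     (SUP \<delta>\<in>{0<..}. SUP N. INF \<nu>\<in>{N..}. INF y\<in>{y\<in>M. d y x < \<delta>}.
        INF \<zeta>\<in>{\<zeta>. dist \<zeta> \<xi> < \<delta>}. a \<nu> \<zeta> y)"

text \<open>Epi-convergence of phis to phi on the product metric space M x PP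
  (convergence in the product topology is componentwise convergence).\<close>
definition epi_conv :: "'x set \<Rightarrow> ('x \<Rightarrow> 'x \<Rightarrow> real) \<Rightarrow> 'q set \<Rightarrow> ('q \<Rightarrow> 'q \<Rightarrow> real)
     \<Rightarrow> (nat \<Rightarrow> 'x \<Rightarrow> 'q \<Rightarrow> ereal) \<Rightarrow> ('x \<Rightarrow> 'q \<Rightarrow> ereal) \<Rightarrow> bool" where
  "epi_conv M d PP dP phis phi \<longleftrightarrow>
     (\<forall>x\<in>M. \<forall>Q\<in>PP.
        (\<forall>xs Qs. (\<forall>n. xs n \<in> M \<and> Qs n \<in> PP) \<and> seq_conv d xs x \<and> seq_conv dP Qs Q \<longrightarrow>
            phi x Q \<le> liminf (\<lambda>n. phis n (xs n) (Qs n))) \<and>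
        (\<exists>xs Qs. (\<forall>n. xs n \<in> M \<and> Qs n \<in> PP) \<and> seq_conv d xs x \<and> seq_conv dP Qs Q \<and>
            (\<lambda>n. phis n (xs n) (Qs n)) \<longlonglongrightarrow> phi x Q))"

definition phi_lim :: "('z \<Rightarrow> 'x \<Rightarrow> ereal) \<Rightarrow> 'x set \<Rightarrow> 'z measure \<Rightarrow> 'x \<Rightarrow> 'z measure \<Rightarrow> ereal" where
  "phi_lim f X P x Q = Eext Q (\<lambda>\<xi>. f \<xi> x + iota X x) + iota {P} Q"

definition phi_seq :: "(nat \<Rightarrow> 'z \<Rightarrow> 'x \<Rightarrow> ereal) \<Rightarrow> (nat \<Rightarrow> 'x set) \<Rightarrow> (nat \<Rightarrow> 'z measure)
     \<Rightarrow> (nat \<Rightarrow> real) \<Rightarrow> ('z measure \<Rightarrow> 'z measure \<Rightarrow> real) \<Rightarrow> nat \<Rightarrow> 'x \<Rightarrow> 'z measure \<Rightarrow> ereal" where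
  "phi_seq fs Xs Ps \<theta> dP \<nu> x Q =
     Eext Q (\<lambda>\<xi>. fs \<nu> \<xi> x + iota (Xs \<nu>) x) + ereal (\<theta> \<nu> * dP Q (Ps \<nu>))"

end

theory Submission
  imports Defs
begin

lemma Eext_mono:
  assumes "\<And>x. g x \<le> h x"
  shows "Eext M g \<le> Eext M h"
proof -
  have a: "(\<integral>\<^sup>+ x. e2ennreal (g x) \<partial>M) \<le> (\<integral>\<^sup>+ x. e2ennreal (h x) \<partial>M)"
    by (intro nn_integral_mono e2ennreal_mono assms)
  have b: "(\<integral>\<^sup>+ x. e2ennreal (- h x) \<partial>M) \<le> (\<integral>\<^sup>+ x. e2ennreal (- g x) \<partial>M)"
    by (intro nn_integral_mono e2ennreal_mono) (use assms in auto)
  show ?thesis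
    unfolding Eext_def Let_def using a b
    by (auto simp: less_eq_ennreal.rep_eq top_unique intro!: ereal_minus_mono)
qed

lemma Eext_top:
  assumes "prob_space M" "\<And>x. g x = \<infinity>"
  shows "Eext M g = \<infinity>"
proof -
  interpret prob_space M by fact
  have "(\<integral>\<^sup>+ x. e2ennreal (g x) \<partial>M) = \<infinity>"
    using assms(2) by (simp add: emeasure_space_1)
  then show ?thesis unfolding Eext_def Let_def by simp
qed

lemma pw1:
  fixes h :: ereal and K :: real
  assumes "0 \<le> K"
  shows "enn2ereal (e2ennreal (max h (- ereal K) + ereal K)) + enn2ereal (e2ennreal (- h))
     \<le> enn2ereal (e2ennreal h) + ereal K + enn2ereal (e2ennreal (- (if h \<le> - ereal K then h else 0)))"
proof (cases h)
  case (real r)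
  then show ?thesis using assms
    by (cases "0 \<le> r") (auto simp: enn2ereal_e2ennreal e2ennreal_neg max_def ennreal_neg zero_ennreal.rep_eq)
qed (use assms in \<open>auto simp: enn2ereal_e2ennreal e2ennreal_neg max_def\<close>)

lemma pw2:
  fixes h :: ereal and K :: real
  assumes "0 \<le> K"
  shows "enn2ereal (e2ennreal (max h (- ereal K) + ereal K)) \<le> enn2ereal (e2ennreal h) + ereal K"
proof (cases h)
  case (real r)
  then show ?thesis using assms
    by (cases "0 \<le> r") (auto simp: enn2ereal_e2ennreal e2ennreal_neg max_def ennreal_neg zero_ennreal.rep_eq)
qed (use assms in \<open>auto simp: enn2ereal_e2ennreal e2ennreal_neg max_def zero_ennreal.rep_eq\<close>)

lemma ereal_fin_arith:
  fixes I B A C :: ereal and K :: real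
  assumes "0 \<le> I" "0 \<le> B" "0 \<le> A" "0 \<le> C" "A \<noteq> \<infinity>" "I + B \<le> A + ereal K + C" "I \<le> A + ereal K"
  shows "I - ereal K + - C \<le> A - B"
  using assms by (cases I; cases B; cases A; cases C) auto

lemma Eext_split:
  assumes M: "prob_space M" and hm: "h \<in> borel_measurable M" and K: "0 \<le> K"
  shows "enn2ereal (\<integral>\<^sup>+x. e2ennreal (max (h x) (- ereal K) + ereal K) \<partial>M) - ereal K
           + Eext M (\<lambda>x. if h x \<le> - ereal K then h x else 0) \<le> Eext M h"
proof -
  interpret prob_space M by fact
  define t where "t = (\<lambda>x. if h x \<le> - ereal K then h x else 0)"
  define A where "A = (\<integral>\<^sup>+x. e2ennreal (h x) \<partial>M)"
  define B where "B = (\<integral>\<^sup>+x. e2ennreal (- h x) \<partial>M)"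
  define I where "I = (\<integral>\<^sup>+x. e2ennreal (max (h x) (- ereal K) + ereal K) \<partial>M)"
  define C where "C = (\<integral>\<^sup>+x. e2ennreal (- t x) \<partial>M)"
  note hm[measurable]
  have tm[measurable]: "t \<in> borel_measurable M" unfolding t_def by measurable
  have t0: "(\<integral>\<^sup>+x. e2ennreal (t x) \<partial>M) = 0"
  proof -
    have "\<And>x. t x \<le> 0" unfolding t_def using K by (auto intro: order_trans[of _ "ereal (-K)"])
    then have "\<And>x. e2ennreal (t x) = 0" by (simp add: e2ennreal_neg)
    then show ?thesis by simp
  qed
  have Et: "Eext M t = - enn2ereal C"
    unfolding Eext_def Let_def t0 C_def by (simp add: zero_ennreal.rep_eq)
  have "I + B = (\<integral>\<^sup>+x. e2ennreal (max (h x) (- ereal K) + ereal K) + e2ennreal (- h x) \<partial>M)"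
    unfolding I_def B_def by (rule nn_integral_add[symmetric]) simp_all
  also have "\<dots> \<le> (\<integral>\<^sup>+x. (e2ennreal (h x) + ennreal K) + e2ennreal (- t x) \<partial>M)"
    using pw1[OF K] unfolding t_def
    by (intro nn_integral_mono) (simp add: less_eq_ennreal.rep_eq plus_ennreal.rep_eq K)
  also have "\<dots> = A + ennreal K + C"
  proof -
    have "(\<integral>\<^sup>+x. (e2ennreal (h x) + ennreal K) + e2ennreal (- t x) \<partial>M)
       = (\<integral>\<^sup>+x. (e2ennreal (h x) + ennreal K) \<partial>M) + C"
      unfolding C_def by (rule nn_integral_add) simp_all
    moreover have "(\<integral>\<^sup>+x. (e2ennreal (h x) + ennreal K) \<partial>M) = A + ennreal K"
      unfolding A_def by (subst nn_integral_add) (simp_all add: emeasure_space_1)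
    ultimately show ?thesis by simp
  qed
  finally have IB: "I + B \<le> A + ennreal K + C" .
  have "I \<le> (\<integral>\<^sup>+x. e2ennreal (h x) + ennreal K \<partial>M)"
    unfolding I_def using pw2[OF K]
    by (intro nn_integral_mono) (simp add: less_eq_ennreal.rep_eq plus_ennreal.rep_eq K)
  also have "\<dots> = A + ennreal K"
    unfolding A_def by (subst nn_integral_add) (simp_all add: emeasure_space_1)
  finally have IA: "I \<le> A + ennreal K" .
  show ?thesis
  proof (cases "A = \<infinity>")
    case True
    then have "Eext M h = \<infinity>" unfolding Eext_def Let_def A_def by simp
    then show ?thesis by simp
  next
    case False
    then have Eh: "Eext M h = enn2ereal A - enn2ereal B" unfolding Eext_def Let_def A_def B_def by simp
    have fin: "enn2ereal A \<noteq> \<infinity>" using False by simp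
    have "enn2ereal I - ereal K + - enn2ereal C \<le> enn2ereal A - enn2ereal B"
      apply (rule ereal_fin_arith[OF _ _ _ _ fin])
      using IB IA K by (auto simp: less_eq_ennreal.rep_eq plus_ennreal.rep_eq)
    then show ?thesis unfolding Eh I_def[symmetric] t_def[symmetric] Et by simp
  qed
qed

lemma pw3:
  fixes h :: ereal and K :: real
  assumes "0 \<le> K"
  shows "enn2ereal (e2ennreal h) + ereal K \<le> enn2ereal (e2ennreal (max h (- ereal K) + ereal K)) + enn2ereal (e2ennreal (- h))"
proof (cases h)
  case (real r)
  then show ?thesis using assms
    by (cases "0 \<le> r") (auto simp: enn2ereal_e2ennreal e2ennreal_neg max_def ennreal_neg zero_ennreal.rep_eq)
qed (use assms in \<open>auto simp: enn2ereal_e2ennreal e2ennreal_neg max_def zero_ennreal.rep_eq\<close>)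

lemma pw4:
  fixes h :: ereal and K :: real
  assumes "0 \<le> K"
  shows "enn2ereal (e2ennreal h) \<le> enn2ereal (e2ennreal (max h (- ereal K) + ereal K))"
proof (cases h)
  case (real r)
  then show ?thesis using assms
    by (cases "0 \<le> r") (auto simp: enn2ereal_e2ennreal e2ennreal_neg max_def ennreal_neg zero_ennreal.rep_eq)
qed (use assms in \<open>auto simp: enn2ereal_e2ennreal e2ennreal_neg max_def zero_ennreal.rep_eq\<close>)

lemma ereal_fin_arith2:
  fixes J B A :: ereal and K :: real
  assumes "0 \<le> J" "0 \<le> B" "0 \<le> A" "A \<noteq> \<infinity>" "A + ereal K \<le> J + B"
  shows "A - B \<le> J - ereal K"
  using assms by (cases J; cases B; cases A) auto

lemma Eext_max_ge:
  assumes M: "prob_space M" and hm: "h \<in> borel_measurable M" and K: "0 \<le> K"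
  shows "Eext M h \<le> enn2ereal (\<integral>\<^sup>+x. e2ennreal (max (h x) (- ereal K) + ereal K) \<partial>M) - ereal K"
proof -
  interpret prob_space M by fact
  define A where "A = (\<integral>\<^sup>+x. e2ennreal (h x) \<partial>M)"
  define B where "B = (\<integral>\<^sup>+x. e2ennreal (- h x) \<partial>M)"
  define J where "J = (\<integral>\<^sup>+x. e2ennreal (max (h x) (- ereal K) + ereal K) \<partial>M)"
  note hm[measurable]
  have "A + ennreal K = (\<integral>\<^sup>+x. e2ennreal (h x) + ennreal K \<partial>M)"
    unfolding A_def by (subst nn_integral_add) (simp_all add: emeasure_space_1)
  also have "\<dots> \<le> (\<integral>\<^sup>+x. e2ennreal (max (h x) (- ereal K) + ereal K) + e2ennreal (- h x) \<partial>M)"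
    using pw3[OF K]
    by (intro nn_integral_mono) (simp add: less_eq_ennreal.rep_eq plus_ennreal.rep_eq K)
  also have "\<dots> = J + B"
    unfolding J_def B_def by (rule nn_integral_add) simp_all
  finally have AJ: "A + ennreal K \<le> J + B" .
  have AJ2: "A \<le> J" unfolding A_def J_def using pw4[OF K]
    by (intro nn_integral_mono) (simp add: less_eq_ennreal.rep_eq)
  show ?thesis
  proof (cases "A = \<infinity>")
    case True
    then have "J = \<infinity>" using AJ2 by (simp add: top_unique)
    then show ?thesis unfolding J_def by simp
  next
    case False
    then have Eh: "Eext M h = enn2ereal A - enn2ereal B" unfolding Eext_def Let_def A_def B_def by simp
    have fin: "enn2ereal A \<noteq> \<infinity>" using False by simp
    have "enn2ereal A - enn2ereal B \<le> enn2ereal J - ereal K"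
      apply (rule ereal_fin_arith2[OF _ _ _ fin])
      using AJ K by (auto simp: less_eq_ennreal.rep_eq plus_ennreal.rep_eq)
    then show ?thesis unfolding Eh J_def by simp
  qed
qed

lemma ennreal_le_by_reals:
  fixes x y :: ennreal
  assumes "\<And>c::real. ennreal c < x \<Longrightarrow> ennreal c \<le> y"
  shows "x \<le> y"
proof (rule ccontr)
  assume "\<not> x \<le> y"
  then have "y < x" by simp
  from ennreal_rat_dense[OF this] obtain r :: rat where "y < ennreal (real_of_rat r)" "ennreal (real_of_rat r) < x"
    by auto
  with assms[of "real_of_rat r"] show False by simp
qed

lemma portmanteau_like:
  fixes Qs :: "nat \<Rightarrow> 'a::metric_space measure" and P :: "'a measure"
    and g :: "nat \<Rightarrow> 'a \<Rightarrow> ennreal" and T :: "'a \<Rightarrow> ennreal"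
  assumes wc: "weak_conv Qs P"
    and Pp: "prob_space P" "sets P = sets borel"
    and Qp: "\<And>n. prob_space (Qs n)" "\<And>n. sets (Qs n) = sets borel"
    and Tm: "T \<in> borel_measurable P"
    and ae: "AE \<xi> in P. \<forall>c::real. ennreal c < T \<xi> \<longrightarrow>
               (\<exists>\<delta>>0. \<exists>N. \<forall>n\<ge>N. \<forall>\<zeta>. dist \<zeta> \<xi> < \<delta> \<longrightarrow> ennreal c \<le> g n \<zeta>)"
    and y: "y < (\<integral>\<^sup>+\<xi>. T \<xi> \<partial>P)"
  shows "eventually (\<lambda>n. y < (\<integral>\<^sup>+\<zeta>. g n \<zeta> \<partial>Qs n)) sequentially"
proof -
  define a where "a m n \<zeta> = enn2real (min (g n \<zeta>) (of_nat m))" for m n :: nat and \<zeta>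
  define S where "S m = ({m..} \<times> (UNIV :: 'a set))" for m :: nat
  define \<phi> where "\<phi> m \<xi> = (INF p \<in> S m. a m (fst p) (snd p) + real m * dist (snd p) \<xi>)" for m \<xi>
  have a0: "0 \<le> a m n \<zeta>" for m n \<zeta> unfolding a_def by simp
  have am: "a m n \<zeta> \<le> real m" for m n \<zeta>
  proof -
    have "a m n \<zeta> \<le> enn2real (of_nat m :: ennreal)" unfolding a_def
      by (rule enn2real_mono) (auto simp: of_nat_less_top)
    then show ?thesis by simp
  qed
  have amono: "m \<le> m' \<Longrightarrow> a m n \<zeta> \<le> a m' n \<zeta>" for m m' n \<zeta>
    unfolding a_def by (rule enn2real_mono) (auto simp: of_nat_less_top intro: min.mono min.strict_coboundedI2 min.coboundedI2)
  have bdd: "bdd_below ((\<lambda>p. a m (fst p) (snd p) + real m * dist (snd p) \<xi>) ` S m)" for m \<xi>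
    by (rule bdd_belowI[of _ 0]) (auto intro!: add_nonneg_nonneg a0)
  have ne: "S m \<noteq> {}" for m unfolding S_def by auto
  have phi_lower: "n \<ge> m \<Longrightarrow> \<phi> m \<xi> \<le> a m n \<zeta> + real m * dist \<zeta> \<xi>" for m n \<zeta> \<xi>
    unfolding \<phi>_def using bdd[of m \<xi>] by (intro cINF_lower2[where x="(n, \<zeta>)"]) (auto simp: S_def)
  have phi_ge: "(\<And>n \<zeta>. n \<ge> m \<Longrightarrow> c \<le> a m n \<zeta> + real m * dist \<zeta> \<xi>) \<Longrightarrow> c \<le> \<phi> m \<xi>" for m c \<xi>
    unfolding \<phi>_def using ne[of m] by (intro cINF_greatest) (auto simp: S_def)
  have phi0: "0 \<le> \<phi> m \<xi>" for m \<xi>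
    by (rule phi_ge) (auto intro!: add_nonneg_nonneg a0)
  have phim: "\<phi> m \<xi> \<le> real m" for m \<xi>
    using phi_lower[of m m \<xi> \<xi>] am[of m m \<xi>] by simp
  have lip: "\<phi> m \<xi> \<le> \<phi> m \<xi>' + real m * dist \<xi> \<xi>'" for m \<xi> \<xi>'
  proof -
    have "\<phi> m \<xi> - real m * dist \<xi> \<xi>' \<le> \<phi> m \<xi>'"
    proof (rule phi_ge)
      fix n \<zeta> assume "m \<le> n"
      have "\<phi> m \<xi> \<le> a m n \<zeta> + real m * dist \<zeta> \<xi>" by (rule phi_lower) fact
      also have "\<dots> \<le> a m n \<zeta> + real m * (dist \<zeta> \<xi>' + dist \<xi> \<xi>')"
        by (intro add_left_mono mult_left_mono) (auto intro: dist_triangle_le[of _ \<xi>'] simp: dist_commute)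
      finally show "\<phi> m \<xi> - real m * dist \<xi> \<xi>' \<le> a m n \<zeta> + real m * dist \<zeta> \<xi>'"
        by (simp add: algebra_simps)
    qed
    then show ?thesis by simp
  qed
  have cont: "continuous_on UNIV (\<phi> m)" for m
  proof (rule lipschitz_on_continuous_on)
    show "(real m)-lipschitz_on UNIV (\<phi> m)"
    proof (rule lipschitz_onI)
      fix x y :: 'a
      show "dist (\<phi> m x) (\<phi> m y) \<le> real m * dist x y"
        using lip[of m x y] lip[of m y x] by (simp add: dist_real_def dist_commute abs_le_iff)
    qed simp
  qed
  have bnd: "bounded (range (\<phi> m))" for m
    unfolding bounded_real using phi0 phim by (intro exI[of _ "real m"]) auto
  have phim_meas: "\<phi> m \<in> borel_measurable M" if "sets M = sets borel" for m and M :: "'a measure"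
    by (subst measurable_cong_sets[OF that refl]) (rule borel_measurable_continuous_onI[OF cont])
  have phi_g: "n \<ge> m \<Longrightarrow> ennreal (\<phi> m \<zeta>) \<le> g n \<zeta>" for m n \<zeta>
  proof -
    assume "n \<ge> m"
    then have "\<phi> m \<zeta> \<le> a m n \<zeta>" using phi_lower[of m n \<zeta> \<zeta>] by simp
    then have "ennreal (\<phi> m \<zeta>) \<le> ennreal (a m n \<zeta>)" by (rule ennreal_leI)
    also have "\<dots> = min (g n \<zeta>) (of_nat m)" unfolding a_def
      by (rule ennreal_enn2real) (auto simp: of_nat_less_top min.strict_coboundedI2)
    also have "\<dots> \<le> g n \<zeta>" by simp
    finally show ?thesis .
  qed
  have phimono: "m \<le> m' \<Longrightarrow> \<phi> m \<xi> \<le> \<phi> m' \<xi>" for m m' \<xi>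
  proof (rule phi_ge)
    fix n \<zeta> assume "m \<le> m'" "m' \<le> n"
    have "\<phi> m \<xi> \<le> a m n \<zeta> + real m * dist \<zeta> \<xi>" using \<open>m \<le> m'\<close> \<open>m' \<le> n\<close> by (intro phi_lower) simp
    also have "\<dots> \<le> a m' n \<zeta> + real m' * dist \<zeta> \<xi>"
      using \<open>m \<le> m'\<close> by (intro add_mono amono mult_right_mono) auto
    finally show "\<phi> m \<xi> \<le> a m' n \<zeta> + real m' * dist \<zeta> \<xi>" .
  qed
  have inc: "incseq (\<lambda>m \<xi>. ennreal (\<phi> m \<xi>))"
    by (auto simp: incseq_def le_fun_def intro!: ennreal_leI phimono)
  have aeT: "AE \<xi> in P. T \<xi> \<le> (SUP m. ennreal (\<phi> m \<xi>))"
    using ae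
  proof eventually_elim
    case (elim \<xi>)
    show ?case
    proof (rule ennreal_le_by_reals)
      fix c :: real assume "ennreal c < T \<xi>"
      with elim obtain \<delta> N where d: "\<delta> > 0" and dN: "\<And>n \<zeta>. n \<ge> N \<Longrightarrow> dist \<zeta> \<xi> < \<delta> \<Longrightarrow> ennreal c \<le> g n \<zeta>"
        by blast
      obtain m :: nat where m: "real m \<ge> max (real N) (max c (c / \<delta>))"
        using real_arch_simple by blast
      have mN: "m \<ge> N" using m by auto
      have mc: "c \<le> real m" using m by auto
      have md: "c \<le> real m * \<delta>" using m d by (auto simp: field_simps)
      have "c \<le> \<phi> m \<xi>"
      proof (rule phi_ge)
        fix n \<zeta> assume "m \<le> n"
        show "c \<le> a m n \<zeta> + real m * dist \<zeta> \<xi>"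
        proof (cases "dist \<zeta> \<xi> < \<delta>")
          case True
          then have "ennreal c \<le> g n \<zeta>" using dN[of n \<zeta>] mN \<open>m \<le> n\<close> by simp
          moreover have "ennreal c \<le> of_nat m" using mc
            by (metis ennreal_le_iff2 ennreal_of_nat_eq_real_of_nat of_nat_0_le_iff)
          ultimately have "ennreal c \<le> min (g n \<zeta>) (of_nat m)" by simp
          then have "c \<le> a m n \<zeta>"
          proof (cases "c \<le> 0")
            case False
            have "enn2real (ennreal c) \<le> a m n \<zeta>" unfolding a_def
              by (rule enn2real_mono) (use \<open>ennreal c \<le> min (g n \<zeta>) (of_nat m)\<close> in \<open>auto simp: of_nat_less_top min.strict_coboundedI2\<close>)
            then show ?thesis using False by simp
          qed (use a0[of m n \<zeta>] in simp)
          moreover have "0 \<le> real m * dist \<zeta> \<xi>" by simp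
          ultimately show ?thesis by linarith
        next
          case False
          then have "real m * \<delta> \<le> real m * dist \<zeta> \<xi>" by (intro mult_left_mono) auto
          then show ?thesis using md a0[of m n \<zeta>] by linarith
        qed
      qed
      then have "ennreal c \<le> ennreal (\<phi> m \<xi>)" by (simp add: ennreal_leI)
      also have "\<dots> \<le> (SUP m. ennreal (\<phi> m \<xi>))" by (rule SUP_upper) simp
      finally show "ennreal c \<le> (SUP m. ennreal (\<phi> m \<xi>))" .
    qed
  qed
  have "(\<integral>\<^sup>+\<xi>. T \<xi> \<partial>P) \<le> (\<integral>\<^sup>+\<xi>. (SUP m. ennreal (\<phi> m \<xi>)) \<partial>P)"
    by (rule nn_integral_mono_AE) (rule aeT)
  also have "\<dots> = (SUP m. \<integral>\<^sup>+\<xi>. ennreal (\<phi> m \<xi>) \<partial>P)"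
    by (rule nn_integral_monotone_convergence_SUP[OF inc]) (use phim_meas[OF Pp(2)] in simp)
  finally have "y < (SUP m. \<integral>\<^sup>+\<xi>. ennreal (\<phi> m \<xi>) \<partial>P)" using y by simp
  then obtain m where ym: "y < (\<integral>\<^sup>+\<xi>. ennreal (\<phi> m \<xi>) \<partial>P)" by (auto simp: less_SUP_iff)
  have int_eq: "(\<integral>\<^sup>+\<xi>. ennreal (\<phi> m \<xi>) \<partial>M) = ennreal (integral\<^sup>L M (\<phi> m))"
    if "prob_space M" "sets M = sets borel" for M
  proof -
    interpret prob_space M by fact
    have "integrable M (\<phi> m)"
      by (rule integrable_const_bound[of _ "real m"]) (use phi0 phim phim_meas[OF that(2)] in auto)
    then show ?thesis by (rule nn_integral_eq_integral) (simp add: phi0)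
  qed
  have "(\<lambda>n. integral\<^sup>L (Qs n) (\<phi> m)) \<longlonglongrightarrow> integral\<^sup>L P (\<phi> m)"
    using wc cont[of m] bnd[of m] unfolding weak_conv_def by blast
  then have "(\<lambda>n. ennreal (integral\<^sup>L (Qs n) (\<phi> m))) \<longlonglongrightarrow> ennreal (integral\<^sup>L P (\<phi> m))"
    by (rule tendsto_ennrealI)
  moreover have "y < ennreal (integral\<^sup>L P (\<phi> m))" using ym int_eq[OF Pp] by simp
  ultimately have ev: "eventually (\<lambda>n. y < ennreal (integral\<^sup>L (Qs n) (\<phi> m))) sequentially"
    by (rule order_tendstoD)
  show ?thesis
    using ev eventually_ge_at_top[of m]
  proof eventually_elim
    case (elim n)
    have "ennreal (integral\<^sup>L (Qs n) (\<phi> m)) = (\<integral>\<^sup>+\<xi>. ennreal (\<phi> m \<xi>) \<partial>Qs n)"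
      using int_eq[OF Qp(1)[of n] Qp(2)[of n]] by simp
    also have "\<dots> \<le> (\<integral>\<^sup>+\<zeta>. g n \<zeta> \<partial>Qs n)"
      by (intro nn_integral_mono phi_g) (use elim in simp)
    finally show ?case using elim by simp
  qed
qed

lemma pw5:
  fixes h :: ereal and g :: real
  assumes "h \<le> ereal g" "0 \<le> g"
  shows "enn2ereal (e2ennreal (ereal g - h)) + enn2ereal (e2ennreal h) = ereal g + enn2ereal (e2ennreal (- h))"
proof (cases h)
  case (real r)
  then show ?thesis using assms
    by (cases "0 \<le> r") (auto simp: enn2ereal_e2ennreal e2ennreal_neg ennreal_neg zero_ennreal.rep_eq)
qed (use assms in \<open>auto simp: enn2ereal_e2ennreal e2ennreal_neg zero_ennreal.rep_eq\<close>)

lemma ereal_fin_arith3: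
  fixes Gh A G B :: ereal
  assumes "0 \<le> Gh" "0 \<le> A" "0 \<le> B" "A \<noteq> \<infinity>" "\<bar>G\<bar> \<noteq> \<infinity>" "Gh + A = G + B"
  shows "Gh = G - (A - B)"
  using assms by (cases Gh; cases A; cases G; cases B) auto

lemma Eext_dom:
  assumes M: "prob_space M" and hm: "h \<in> borel_measurable M" and gi: "integrable M g"
    and g0: "\<And>x. 0 \<le> g x" and le: "AE x in M. h x \<le> ereal (g x)"
  shows "enn2ereal (\<integral>\<^sup>+x. e2ennreal (ereal (g x) - h x) \<partial>M) = ereal (\<integral>x. g x \<partial>M) - Eext M h"
proof -
  interpret prob_space M by fact
  have gm[measurable]: "g \<in> borel_measurable M" using gi by (rule borel_measurable_integrable)
  note hm[measurable]
  define A where "A = (\<integral>\<^sup>+x. e2ennreal (h x) \<partial>M)"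
  define B where "B = (\<integral>\<^sup>+x. e2ennreal (- h x) \<partial>M)"
  define Gh where "Gh = (\<integral>\<^sup>+x. e2ennreal (ereal (g x) - h x) \<partial>M)"
  have G: "(\<integral>\<^sup>+x. ennreal (g x) \<partial>M) = ennreal (\<integral>x. g x \<partial>M)"
    by (rule nn_integral_eq_integral[OF gi]) (simp add: g0)
  have "Gh + A = (\<integral>\<^sup>+x. e2ennreal (ereal (g x) - h x) + e2ennreal (h x) \<partial>M)"
    unfolding Gh_def A_def by (rule nn_integral_add[symmetric]) simp_all
  also have "\<dots> = (\<integral>\<^sup>+x. ennreal (g x) + e2ennreal (- h x) \<partial>M)"
    using le
  proof (intro nn_integral_cong_AE, eventually_elim)
    case (elim x)
    then have "h x \<le> ereal (g x)" by simp
    from pw5[OF this g0[of x]] show ?case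
      by (simp add: ennreal.enn2ereal_inject[symmetric] plus_ennreal.rep_eq g0)
  qed
  also have "\<dots> = ennreal (\<integral>x. g x \<partial>M) + B"
    unfolding B_def G[symmetric] by (rule nn_integral_add) simp_all
  finally have eq: "Gh + A = ennreal (\<integral>x. g x \<partial>M) + B" .
  have "A \<le> (\<integral>\<^sup>+x. ennreal (g x) \<partial>M)"
    unfolding A_def using le
    by (intro nn_integral_mono_AE) (auto elim!: eventually_mono dest: e2ennreal_mono)
  then have Afin: "A \<noteq> \<infinity>" using G by (auto simp: top_unique)
  have Eh: "Eext M h = enn2ereal A - enn2ereal B" using Afin unfolding Eext_def Let_def A_def B_def by simp
  have "enn2ereal Gh = ereal (\<integral>x. g x \<partial>M) - (enn2ereal A - enn2ereal B)"
  proof (rule ereal_fin_arith3)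
    show "enn2ereal A \<noteq> \<infinity>" using Afin by simp
    show "enn2ereal Gh + enn2ereal A = ereal (\<integral>x. g x \<partial>M) + enn2ereal B"
      using arg_cong[OF eq, of enn2ereal] by (simp add: plus_ennreal.rep_eq integral_nonneg_AE g0)
  qed simp_all
  then show ?thesis unfolding Eh Gh_def .
qed

lemma ennreal_less_e2ennreal:
  assumes "ennreal c < e2ennreal z" "0 < c"
  shows "ereal c < z"
proof (rule ccontr)
  assume "\<not> ereal c < z"
  then have "z \<le> ereal c" by simp
  then have "e2ennreal z \<le> e2ennreal (ereal c)" by (rule e2ennreal_mono)
  then show False using assms by (simp add: e2ennreal_ereal)
qed

lemma ereal_shift_lemma:
  fixes F :: ereal and c K :: real
  assumes "ereal c < max F (- ereal K) + ereal K" "0 < c"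
  shows "ereal (c - K) < F"
  using assms by (cases F) (auto simp: max_def split: if_splits)

lemma ereal_final_arith:
  fixes E J L :: ereal and K e :: real
  assumes "E \<le> J - ereal K" "J - ereal K - ereal e \<le> L"
  shows "E \<le> L + ereal e"
  using assms by (cases E; cases J; cases L) auto

lemma ereal_step_arith:
  fixes y I s :: ereal and K e :: real
  assumes "y + ereal K + ereal e < I" "I - ereal K - ereal e \<le> s"
  shows "y < s"
  using assms by (cases y; cases I; cases s) auto

lemma ereal_cancel_arith:
  fixes E L :: ereal and c :: real
  assumes "ereal c - E \<le> ereal c - L"
  shows "L \<le> E"
  using assms by (cases E; cases L) auto

theorem proposition4p1:
  fixes S :: "(real ^ 'd) set"
    and XX :: "(real ^ 'd \<Rightarrow> ereal) set" and dX :: "(real ^ 'd \<Rightarrow> ereal) \<Rightarrow> (real ^ 'd \<Rightarrow> ereal) \<Rightarrow> real"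
    and PP :: "'xi::metric_space measure set" and dP :: "'xi measure \<Rightarrow> 'xi measure \<Rightarrow> real"
    and f :: "'xi \<Rightarrow> (real ^ 'd \<Rightarrow> ereal) \<Rightarrow> ereal"
    and fs :: "nat \<Rightarrow> 'xi \<Rightarrow> (real ^ 'd \<Rightarrow> ereal) \<Rightarrow> ereal"
    and X :: "(real ^ 'd \<Rightarrow> ereal) set" and Xs :: "nat \<Rightarrow> (real ^ 'd \<Rightarrow> ereal) set"
    and P :: "'xi measure" and Ps :: "nat \<Rightarrow> 'xi measure"
    and \<theta> :: "nat \<Rightarrow> real"
  assumes S_closed: "closed S"
    and XX_fun: "\<forall>u\<in>XX. \<forall>s. s \<notin> S \<longrightarrow> u s = undefined"
    and XX_metric: "Metric_space XX dX"
    and PP_prob: "\<forall>Q\<in>PP. prob_space Q \<and> sets Q = sets borel"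
    and PP_metric: "Metric_space PP dP"
    and PP_weak: "\<forall>Qs Q. (\<forall>n. Qs n \<in> PP) \<and> Q \<in> PP \<longrightarrow> (seq_conv dP Qs Q \<longleftrightarrow> weak_conv Qs Q)"
    and X_sub: "X \<subseteq> XX" and Xs_sub: "\<forall>\<nu>. Xs \<nu> \<subseteq> XX"
    and P_in: "P \<in> PP" and Ps_in: "\<forall>\<nu>. Ps \<nu> \<in> PP"
    and \<theta>_nonneg: "\<forall>\<nu>. 0 \<le> \<theta> \<nu>"
    and Xs_closed: "\<forall>\<nu>. closedin (Metric_space.mtopology XX dX) (Xs \<nu>)"
    and Xs_conv: "set_conv XX dX Xs X"
    and \<theta>_inf: "filterlim \<theta> at_top sequentially"
    and \<theta>_dist: "(\<lambda>\<nu>. \<theta> \<nu> * dP (Ps \<nu>) P) \<longlonglongrightarrow> 0"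
    and cond_i: "\<forall>x\<in>XX. (\<lambda>\<xi>. f \<xi> x) \<in> borel_measurable borel \<and>
                     (\<forall>\<nu>. (\<lambda>\<xi>. fs \<nu> \<xi> x) \<in> borel_measurable borel) \<and>
                     (\<forall>\<xi>. f \<xi> x > -\<infinity>)"
    and cond_ii: "\<forall>x\<in>XX. \<forall>Qs. (\<forall>\<nu>. Qs \<nu> \<in> PP) \<and> seq_conv dP Qs P \<longrightarrow>
                   Liminf at_top (\<lambda>K::real.
                     liminf2 XX dX
                       (\<lambda>\<nu> y. Eext (Qs \<nu>) (\<lambda>\<xi>.
                          if fs \<nu> \<xi> y + iota (Xs \<nu>) y \<le> - ereal K
                          then fs \<nu> \<xi> y + iota (Xs \<nu>) y else 0)) x) = 0"
    and cond_iii: "\<forall>x\<in>XX. AE \<xi> in P. liminf3 XX dX fs x \<xi> \<ge> f \<xi> x"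
    and cond_iv: "\<forall>x\<in>XX. \<forall>xs Qs Q. (\<forall>\<nu>. xs \<nu> \<in> Xs \<nu>) \<and> seq_conv dX xs x \<and>
                   (\<forall>\<nu>. Qs \<nu> \<in> PP) \<and> Q \<in> PP \<and> seq_conv dP Qs Q \<longrightarrow>
                   liminf (\<lambda>\<nu>. Eext (Qs \<nu>) (\<lambda>\<xi>. fs \<nu> \<xi> (xs \<nu>))) > -\<infinity>"
    and cond_v: "\<forall>x\<in>XX. \<forall>xs. (\<forall>\<nu>. xs \<nu> \<in> Xs \<nu>) \<and> seq_conv dX xs x \<longrightarrow>
                   (\<exists>g::'xi \<Rightarrow> real. integrable P g \<and> (\<forall>\<xi>. 0 \<le> g \<xi>) \<and>
                      (AE \<xi> in P. (\<forall>\<nu>. fs \<nu> \<xi> (xs \<nu>) \<le> ereal (g \<xi>)) \<and>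
                                  (\<lambda>\<nu>. fs \<nu> \<xi> (xs \<nu>)) \<longlonglongrightarrow> f \<xi> x))"
  shows "epi_conv XX dX PP dP (phi_seq fs Xs Ps \<theta> dP) (phi_lim f X P)"
proof -
  interpret PPm: Metric_space PP dP by (rule PP_metric)
  interpret XXm: Metric_space XX dX by (rule XX_metric)
  have probQ: "prob_space Q" if "Q \<in> PP" for Q using PP_prob that by blast
  have setsQ: "sets Q = sets borel" if "Q \<in> PP" for Q using PP_prob that by blast
  have measB: "g \<in> borel_measurable Q" if "Q \<in> PP" "g \<in> borel_measurable borel" for Q and g :: "'xi \<Rightarrow> ereal"
    using that(2) by (subst measurable_cong_sets[OF setsQ[OF that(1)] refl])
  have notin_ev: "eventually (\<lambda>n. xs n \<notin> Xs n) sequentially"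
    if "x \<in> XX" "x \<notin> X" "seq_conv dX xs x" for x xs
  proof (rule ccontr)
    assume "\<not> eventually (\<lambda>n. xs n \<notin> Xs n) sequentially"
    then have "\<forall>N. \<exists>n\<ge>N. xs n \<in> Xs n" by (auto simp: eventually_sequentially)
    then have "infinite {n. xs n \<in> Xs n}" using infinite_nat_iff_unbounded_le by auto
    then obtain r :: "nat \<Rightarrow> nat" where r: "strict_mono r" "\<And>k. r k \<in> {n. xs n \<in> Xs n}"
      using infinite_enumerate by blast
    have "((\<lambda>n. dX (xs n) x) \<circ> r) \<longlonglongrightarrow> 0"
      using that(3) unfolding seq_conv_def by (rule LIMSEQ_subseq_LIMSEQ) (rule r(1))
    then have "seq_conv dX (xs \<circ> r) x" unfolding seq_conv_def by (simp add: o_def)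
    moreover have "\<forall>k. (xs \<circ> r) k \<in> Xs (r k)" using r(2) by simp
    ultimately have "x \<in> outer_limit XX dX Xs" unfolding outer_limit_def using that(1) r(1)
      by (intro CollectI conjI exI[of _ r] exI[of _ "xs \<circ> r"]) auto
    then show False using Xs_conv that(2) unfolding set_conv_def by simp
  qed
  have inner: "\<exists>a. (\<forall>n. a n \<in> Xs n) \<and> seq_conv dX a x" if "x \<in> X" for x
    using that Xs_conv unfolding set_conv_def inner_limit_def by blast
  have phi_inf: "phi_lim f X P x Q = \<infinity>" if "Q \<in> PP" "Q \<noteq> P \<or> x \<notin> X" for x Q
    using that(2)
  proof
    assume "Q \<noteq> P" then show ?thesis by (simp add: phi_lim_def iota_def)
  next
    assume "x \<notin> X"
    then have "Eext Q (\<lambda>\<xi>. f \<xi> x + iota X x) = \<infinity>"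
      by (intro Eext_top[OF probQ[OF that(1)]]) (simp add: iota_def)
    then show ?thesis by (simp add: phi_lim_def)
  qed
  have dPs: "(\<lambda>n. dP (Ps n) P) \<longlonglongrightarrow> 0"
  proof (rule tendsto_sandwich[of "\<lambda>n. 0" _ _ "\<lambda>n. \<theta> n * dP (Ps n) P"])
    show "eventually (\<lambda>n. 0 \<le> dP (Ps n) P) sequentially" by simp
    have "eventually (\<lambda>n. 1 \<le> \<theta> n) sequentially" using \<theta>_inf by (simp add: filterlim_at_top)
    then show "eventually (\<lambda>n. dP (Ps n) P \<le> \<theta> n * dP (Ps n) P) sequentially"
    proof eventually_elim
      case (elim n)
      then show ?case using mult_right_mono[OF elim, of "dP (Ps n) P"] by simp
    qed
  qed (auto intro: \<theta>_dist)
  have blow: "(\<lambda>n. e n + ereal (\<theta> n * dP (Qs n) (Ps n))) \<longlonglongrightarrow> \<infinity>"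
    if "eventually (\<lambda>n. ereal B \<le> e n) sequentially" "\<forall>n. Qs n \<in> PP" "Q \<in> PP" "seq_conv dP Qs Q" "Q \<noteq> P"
    for e :: "nat \<Rightarrow> ereal" and B Qs Q
  proof -
    define D where "D = dP Q P"
    have D: "0 < D" unfolding D_def using that(3,5) P_in by simp
    have "(\<lambda>n. dP (Qs n) Q + dP (Ps n) P) \<longlonglongrightarrow> 0 + 0"
      using that(4) dPs unfolding seq_conv_def by (intro tendsto_add)
    then have ev1: "eventually (\<lambda>n. dP (Qs n) Q + dP (Ps n) P < D / 2) sequentially"
      using D by (intro order_tendstoD(2)) auto
    have ev2: "eventually (\<lambda>n. D / 2 \<le> dP (Qs n) (Ps n)) sequentially"
      using ev1
    proof eventually_elim
      case (elim n)
      have "D \<le> dP Q (Qs n) + dP (Qs n) P" unfolding D_def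
        using PPm.triangle[of Q "Qs n" P] that(2,3) P_in by simp
      also have "dP (Qs n) P \<le> dP (Qs n) (Ps n) + dP (Ps n) P"
        using PPm.triangle[of "Qs n" "Ps n" P] that(2) Ps_in P_in by simp
      finally show ?case using elim PPm.commute[of Q "Qs n"] by simp
    qed
    show ?thesis unfolding tendsto_PInfty
    proof
      fix r :: real
      have ev3: "eventually (\<lambda>n. 2 * (\<bar>r - B\<bar> + 1) / D \<le> \<theta> n) sequentially"
        using \<theta>_inf by (simp add: filterlim_at_top)
      show "eventually (\<lambda>n. ereal r < e n + ereal (\<theta> n * dP (Qs n) (Ps n))) sequentially"
        using ev2 ev3 that(1)
      proof eventually_elim
        case (elim n)
        have "2 * (\<bar>r - B\<bar> + 1) / D * (D / 2) \<le> \<theta> n * dP (Qs n) (Ps n)"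
          using elim(1,2) D \<theta>_nonneg by (intro mult_mono) auto
        moreover have "2 * (\<bar>r - B\<bar> + 1) / D * (D / 2) = \<bar>r - B\<bar> + 1" using D by simp
        ultimately have "\<bar>r - B\<bar> + 1 \<le> \<theta> n * dP (Qs n) (Ps n)" by linarith
        then have "ereal r < ereal B + ereal (\<theta> n * dP (Qs n) (Ps n))" by simp
        also have "\<dots> \<le> e n + ereal (\<theta> n * dP (Qs n) (Ps n))" using elim(3) by (rule add_right_mono)
        finally show ?case .
      qed
    qed
  qed
  have seq_inf: "(\<lambda>n. phi_seq fs Xs Ps \<theta> dP n (xs n) (Qs n)) \<longlonglongrightarrow> \<infinity>"
    if "x \<in> XX" "\<forall>n. xs n \<in> XX" "seq_conv dX xs x" "\<forall>n. Qs n \<in> PP" "Q \<in> PP" "seq_conv dP Qs Q"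
       "Q \<noteq> P \<or> x \<notin> X" for x xs Qs Q
  proof (cases "x \<in> X")
    case False
    have "eventually (\<lambda>n. phi_seq fs Xs Ps \<theta> dP n (xs n) (Qs n) = \<infinity>) sequentially"
      using notin_ev[OF that(1) False that(3)]
    proof eventually_elim
      case (elim n)
      then have "Eext (Qs n) (\<lambda>\<xi>. fs n \<xi> (xs n) + iota (Xs n) (xs n)) = \<infinity>"
        using that(4) by (intro Eext_top[OF probQ]) (auto simp: iota_def)
      then show ?case by (simp add: phi_seq_def)
    qed
    then show ?thesis by (rule tendsto_eventually)
  next
    case True
    then have QP: "Q \<noteq> P" using that(7) by simp
    obtain a where a: "\<forall>n. a n \<in> Xs n" "seq_conv dX a x" using inner True by blast
    define xs' where "xs' n = (if xs n \<in> Xs n then xs n else a n)" for n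
    have xs'X: "\<forall>n. xs' n \<in> Xs n" using a unfolding xs'_def by auto
    have "(\<lambda>n. dX (xs' n) x) \<longlonglongrightarrow> 0"
    proof (rule tendsto_sandwich[of "\<lambda>n. 0" _ _ "\<lambda>n. dX (xs n) x + dX (a n) x"])
      show "eventually (\<lambda>n. dX (xs' n) x \<le> dX (xs n) x + dX (a n) x) sequentially"
        by (auto simp: xs'_def add_increasing add_increasing2)
      show "(\<lambda>n. dX (xs n) x + dX (a n) x) \<longlonglongrightarrow> 0"
        using tendsto_add[OF that(3)[unfolded seq_conv_def] a(2)[unfolded seq_conv_def]] by simp
    qed auto
    then have xs'c: "seq_conv dX xs' x" by (simp add: seq_conv_def)
    have "liminf (\<lambda>\<nu>. Eext (Qs \<nu>) (\<lambda>\<xi>. fs \<nu> \<xi> (xs' \<nu>))) > -\<infinity>"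
      using cond_iv[rule_format, of x xs' Qs Q] that(1) xs'X xs'c that(4,5,6) by simp
    then obtain B :: real where B: "ereal B < liminf (\<lambda>\<nu>. Eext (Qs \<nu>) (\<lambda>\<xi>. fs \<nu> \<xi> (xs' \<nu>)))"
    proof (cases "liminf (\<lambda>\<nu>. Eext (Qs \<nu>) (\<lambda>\<xi>. fs \<nu> \<xi> (xs' \<nu>)))")
      case (real r)
      then show ?thesis using that[of "r - 1"] by simp
    next
      case PInf
      then show ?thesis using that[of 0] by simp
    qed simp
    have evB: "eventually (\<lambda>n. ereal B \<le> Eext (Qs n) (\<lambda>\<xi>. fs n \<xi> (xs n) + iota (Xs n) (xs n))) sequentially"
      using less_LiminfD[OF B]
    proof eventually_elim
      case (elim n)
      show ?case
      proof (cases "xs n \<in> Xs n")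
        case True
        then show ?thesis using elim by (simp add: xs'_def iota_def)
      next
        case False
        then have "Eext (Qs n) (\<lambda>\<xi>. fs n \<xi> (xs n) + iota (Xs n) (xs n)) = \<infinity>"
          using that(4) by (intro Eext_top[OF probQ]) (auto simp: iota_def)
        then show ?thesis by simp
      qed
    qed
    show ?thesis unfolding phi_seq_def
      by (rule blow[OF evB that(4,5,6) QP])
  qed
  have main_liminf: "Eext P (\<lambda>\<xi>. f \<xi> x) \<le> liminf (\<lambda>n. phi_seq fs Xs Ps \<theta> dP n (xs n) (Qs n))"
    if hx: "x \<in> X" "\<forall>n. xs n \<in> XX" "seq_conv dX xs x" "\<forall>n. Qs n \<in> PP" "seq_conv dP Qs P" for x xs Qs
  proof -
    have xXX: "x \<in> XX" using hx(1) X_sub by blast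
    define h where "h n \<xi> = fs n \<xi> (xs n) + iota (Xs n) (xs n)" for n \<xi>
    define s where "s n = phi_seq fs Xs Ps \<theta> dP n (xs n) (Qs n)" for n
    define E where "E = Eext P (\<lambda>\<xi>. f \<xi> x)"
    have Pp: "prob_space P" using probQ[OF P_in] .
    have hm: "h n \<in> borel_measurable (Qs n)" for n
    proof -
      have "(\<lambda>\<xi>. fs n \<xi> (xs n)) \<in> borel_measurable (Qs n)"
        using measB[OF hx(4)[rule_format, of n]] cond_i hx(2) by blast
      then show ?thesis unfolding h_def by measurable
    qed
    have Fm: "(\<lambda>\<xi>. f \<xi> x) \<in> borel_measurable P"
      using measB[OF P_in] cond_i xXX by blast
    have s_ge: "Eext (Qs n) (h n) \<le> s n" for n
    proof -
      have "0 \<le> \<theta> n * dP (Qs n) (Ps n)" using \<theta>_nonneg by simp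
      then show ?thesis unfolding s_def phi_seq_def h_def
        by (simp add: add_increasing2)
    qed
    have dconv: "eventually (\<lambda>n. dX (xs n) x < \<delta>) sequentially" if "0 < \<delta>" for \<delta>
      using hx(3) that unfolding seq_conv_def by (intro order_tendstoD(2)) auto
    have wc: "weak_conv Qs P" using PP_weak hx(4,5) P_in by blast
    show ?thesis
      unfolding E_def[symmetric] s_def[symmetric]
    proof (rule ereal_le_epsilon2)
      fix \<epsilon> :: real assume "0 < \<epsilon>"
      have L0: "Liminf at_top (\<lambda>K::real. liminf2 XX dX
                       (\<lambda>\<nu> y. Eext (Qs \<nu>) (\<lambda>\<xi>.
                          if fs \<nu> \<xi> y + iota (Xs \<nu>) y \<le> - ereal K
                          then fs \<nu> \<xi> y + iota (Xs \<nu>) y else 0)) x) = 0"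
        using cond_ii[rule_format, of x Qs] xXX hx(4,5) by blast
      have "- ereal \<epsilon> < Liminf at_top (\<lambda>K::real. liminf2 XX dX
                       (\<lambda>\<nu> y. Eext (Qs \<nu>) (\<lambda>\<xi>.
                          if fs \<nu> \<xi> y + iota (Xs \<nu>) y \<le> - ereal K
                          then fs \<nu> \<xi> y + iota (Xs \<nu>) y else 0)) x)"
        unfolding L0 using \<open>0 < \<epsilon>\<close> by simp
      from less_LiminfD[OF this] obtain K0 where K0: "\<And>K. K \<ge> K0 \<Longrightarrow> - ereal \<epsilon> < liminf2 XX dX
                       (\<lambda>\<nu> y. Eext (Qs \<nu>) (\<lambda>\<xi>.
                          if fs \<nu> \<xi> y + iota (Xs \<nu>) y \<le> - ereal K
                          then fs \<nu> \<xi> y + iota (Xs \<nu>) y else 0)) x"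
        unfolding eventually_at_top_linorder by blast
      define K where "K = max K0 0"
      have K: "0 \<le> K" unfolding K_def by simp
      have "- ereal \<epsilon> < liminf2 XX dX
                       (\<lambda>\<nu> y. Eext (Qs \<nu>) (\<lambda>\<xi>.
                          if fs \<nu> \<xi> y + iota (Xs \<nu>) y \<le> - ereal K
                          then fs \<nu> \<xi> y + iota (Xs \<nu>) y else 0)) x"
        using K0[of K] unfolding K_def by simp
      then obtain \<delta> N where \<delta>: "0 < \<delta>" and N: "- ereal \<epsilon> < (INF \<nu>\<in>{N..}. INF y\<in>{y\<in>XX. dX y x < \<delta>}.
             Eext (Qs \<nu>) (\<lambda>\<xi>. if fs \<nu> \<xi> y + iota (Xs \<nu>) y \<le> - ereal K
                          then fs \<nu> \<xi> y + iota (Xs \<nu>) y else 0))"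
        unfolding liminf2_def less_SUP_iff by auto
      have evT: "eventually (\<lambda>n. - ereal \<epsilon> < Eext (Qs n) (\<lambda>\<xi>. if h n \<xi> \<le> - ereal K then h n \<xi> else 0)) sequentially"
        using dconv[OF \<delta>] eventually_ge_at_top[of N]
      proof eventually_elim
        case (elim n)
        have "- ereal \<epsilon> < (INF y\<in>{y\<in>XX. dX y x < \<delta>}.
             Eext (Qs n) (\<lambda>\<xi>. if fs n \<xi> y + iota (Xs n) y \<le> - ereal K
                          then fs n \<xi> y + iota (Xs n) y else 0))"
          using less_INF_D[OF N, of n] elim by simp
        from less_INF_D[OF this, of "xs n"] show ?case unfolding h_def using elim hx(2) by simp
      qed
      define I where "I n = (\<integral>\<^sup>+\<xi>. e2ennreal (max (h n \<xi>) (- ereal K) + ereal K) \<partial>Qs n)" for n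
      define J where "J = (\<integral>\<^sup>+\<xi>. e2ennreal (max (f \<xi> x) (- ereal K) + ereal K) \<partial>P)"
      have evS: "eventually (\<lambda>n. enn2ereal (I n) - ereal K - ereal \<epsilon> \<le> s n) sequentially"
        using evT
      proof eventually_elim
        case (elim n)
        have "enn2ereal (I n) - ereal K + Eext (Qs n) (\<lambda>\<xi>. if h n \<xi> \<le> - ereal K then h n \<xi> else 0)
              \<le> Eext (Qs n) (h n)"
          unfolding I_def by (rule Eext_split[OF probQ[OF hx(4)[rule_format]] hm K])
        moreover have "enn2ereal (I n) - ereal K - ereal \<epsilon> \<le>
              enn2ereal (I n) - ereal K + Eext (Qs n) (\<lambda>\<xi>. if h n \<xi> \<le> - ereal K then h n \<xi> else 0)"
          using elim by (cases "enn2ereal (I n)";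
              cases "Eext (Qs n) (\<lambda>\<xi>. if h n \<xi> \<le> - ereal K then h n \<xi> else 0)") auto
        ultimately show ?case using s_ge[of n] by (meson order_trans)
      qed
      have portm: "eventually (\<lambda>n. y < I n) sequentially" if "y < J" for y
        unfolding I_def
      proof (rule portmanteau_like[OF wc Pp setsQ[OF P_in]])
        show "prob_space (Qs n)" for n using probQ hx(4) by blast
        show "sets (Qs n) = sets borel" for n using setsQ hx(4) by blast
        show "(\<lambda>\<xi>. e2ennreal (max (f \<xi> x) (- ereal K) + ereal K)) \<in> borel_measurable P"
          using Fm by measurable
        show "y < (\<integral>\<^sup>+\<xi>. e2ennreal (max (f \<xi> x) (- ereal K) + ereal K) \<partial>P)" using that unfolding J_def .
        show "AE \<xi> in P. \<forall>c::real. ennreal c < e2ennreal (max (f \<xi> x) (- ereal K) + ereal K) \<longrightarrow>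
               (\<exists>\<delta>>0. \<exists>N. \<forall>n\<ge>N. \<forall>\<zeta>. dist \<zeta> \<xi> < \<delta> \<longrightarrow>
                  ennreal c \<le> e2ennreal (max (h n \<zeta>) (- ereal K) + ereal K))"
        proof -
          have "AE \<xi> in P. f \<xi> x \<le> liminf3 XX dX fs x \<xi>" using cond_iii xXX by blast
          then show ?thesis
          proof eventually_elim
            case (elim \<xi>)
            then have lf: "f \<xi> x \<le> liminf3 XX dX fs x \<xi>" by simp
            show ?case
            proof (intro allI impI)
            fix c
            assume cT: "ennreal c < e2ennreal (max (f \<xi> x) (- ereal K) + ereal K)"
            show "\<exists>\<delta>>0. \<exists>N. \<forall>n\<ge>N. \<forall>\<zeta>. dist \<zeta> \<xi> < \<delta> \<longrightarrow>
                  ennreal c \<le> e2ennreal (max (h n \<zeta>) (- ereal K) + ereal K)"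
            proof (cases "c \<le> 0")
              case True
              then show ?thesis by (intro exI[of _ 1]) (auto simp: ennreal_neg)
            next
              case False
              then have c0: "0 < c" by simp
              have "ereal (c - K) < f \<xi> x"
                by (rule ereal_shift_lemma[OF ennreal_less_e2ennreal[OF cT c0] c0])
              then have "ereal (c - K) < liminf3 XX dX fs x \<xi>" using lf by simp
              then obtain \<delta>1 N1 where d1: "0 < \<delta>1" and N1: "ereal (c - K) < (INF \<nu>\<in>{N1..}. INF y\<in>{y\<in>XX. dX y x < \<delta>1}.
                    INF \<zeta>\<in>{\<zeta>. dist \<zeta> \<xi> < \<delta>1}. fs \<nu> \<zeta> y)"
                unfolding liminf3_def less_SUP_iff by auto
              obtain N2 where N2: "\<And>n. n \<ge> N2 \<Longrightarrow> dX (xs n) x < \<delta>1"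
                using dconv[OF d1] unfolding eventually_sequentially by blast
              show ?thesis
              proof (intro exI[of _ \<delta>1] exI[of _ "max N1 N2"] conjI allI impI d1)
                fix n \<zeta> assume n: "max N1 N2 \<le> n" and z: "dist \<zeta> \<xi> < \<delta>1"
                have "ereal (c - K) < (INF y\<in>{y\<in>XX. dX y x < \<delta>1}. INF \<zeta>\<in>{\<zeta>. dist \<zeta> \<xi> < \<delta>1}. fs n \<zeta> y)"
                  using less_INF_D[OF N1, of n] n by simp
                then have "ereal (c - K) < (INF \<zeta>\<in>{\<zeta>. dist \<zeta> \<xi> < \<delta>1}. fs n \<zeta> (xs n))"
                  using less_INF_D[where i="xs n"] hx(2) N2[of n] n by auto
                then have "ereal (c - K) < fs n \<zeta> (xs n)"
                  using less_INF_D[where i=\<zeta>] z by auto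
                moreover have "fs n \<zeta> (xs n) \<le> h n \<zeta>"
                  unfolding h_def iota_def by simp
                ultimately have "ereal (c - K) < h n \<zeta>" by simp
                then have "ereal c \<le> max (h n \<zeta>) (- ereal K) + ereal K"
                  by (cases "h n \<zeta>") (auto simp: max_def)
                then have "e2ennreal (ereal c) \<le> e2ennreal (max (h n \<zeta>) (- ereal K) + ereal K)"
                  by (rule e2ennreal_mono)
                then show "ennreal c \<le> e2ennreal (max (h n \<zeta>) (- ereal K) + ereal K)"
                  by (simp add: e2ennreal_ereal)
              qed
            qed
            qed
          qed
        qed
      qed
      have EJ: "E \<le> enn2ereal J - ereal K"
        unfolding E_def J_def by (rule Eext_max_ge[OF Pp Fm K])
      have "enn2ereal J - ereal K - ereal \<epsilon> \<le> liminf s"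
      proof (subst le_Liminf_iff, intro allI impI)
        fix y assume y: "y < enn2ereal J - ereal K - ereal \<epsilon>"
        show "eventually (\<lambda>n. y < s n) sequentially"
        proof (cases "y + ereal K + ereal \<epsilon> < 0")
          case True
          show ?thesis using evS
          proof eventually_elim
            case (elim n)
            show ?case
              by (rule ereal_step_arith[of y K \<epsilon> "enn2ereal (I n)"])
                 (use True elim in \<open>auto intro: less_le_trans[OF _ enn2ereal_nonneg]\<close>)
          qed
        next
          case False
          have yJ: "y + ereal K + ereal \<epsilon> < enn2ereal J"
            using y by (cases y; cases "enn2ereal J") auto
          have "e2ennreal (y + ereal K + ereal \<epsilon>) < J"
            using yJ False by (simp add: less_ennreal.rep_eq enn2ereal_e2ennreal)
          from portm[OF this] evS show ?thesis
          proof eventually_elim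
            case (elim n)
            have "y + ereal K + ereal \<epsilon> < enn2ereal (I n)"
              using elim(1) False by (simp add: less_ennreal.rep_eq enn2ereal_e2ennreal)
            then show ?case by (rule ereal_step_arith) (rule elim(2))
          qed
        qed
      qed
      then show "E \<le> liminf s + ereal \<epsilon>"
        by (rule ereal_final_arith[OF EJ])
    qed
  qed
  have main_limsup: "limsup (\<lambda>n. phi_seq fs Xs Ps \<theta> dP n (a n) P) \<le> Eext P (\<lambda>\<xi>. f \<xi> x)"
    if hx: "x \<in> X" "\<forall>n. a n \<in> Xs n" "seq_conv dX a x" for x a
  proof -
    have xXX: "x \<in> XX" using hx(1) X_sub by blast
    have aXX: "\<forall>n. a n \<in> XX" using hx(2) Xs_sub by blast
    obtain g :: "'xi \<Rightarrow> real" where gi: "integrable P g" and g0: "\<forall>\<xi>. 0 \<le> g \<xi>"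
      and gae: "AE \<xi> in P. (\<forall>\<nu>. fs \<nu> \<xi> (a \<nu>) \<le> ereal (g \<xi>)) \<and> (\<lambda>\<nu>. fs \<nu> \<xi> (a \<nu>)) \<longlonglongrightarrow> f \<xi> x"
      using cond_v[rule_format, of x a] xXX hx(2,3) by blast
    define u where "u n = Eext P (\<lambda>\<xi>. fs n \<xi> (a n))" for n
    define c where "c = (\<integral>\<xi>. g \<xi> \<partial>P)"
    define I where "I n = (\<integral>\<^sup>+\<xi>. e2ennreal (ereal (g \<xi>) - fs n \<xi> (a n)) \<partial>P)" for n
    have Pp: "prob_space P" using probQ[OF P_in] .
    have fsm: "(\<lambda>\<xi>. fs n \<xi> (a n)) \<in> borel_measurable P" for n
      using measB[OF P_in] cond_i aXX by blast
    have Fm: "(\<lambda>\<xi>. f \<xi> x) \<in> borel_measurable P"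
      using measB[OF P_in] cond_i xXX by blast
    have gm[measurable]: "g \<in> borel_measurable P" using gi by (rule borel_measurable_integrable)
    have eqn: "phi_seq fs Xs Ps \<theta> dP n (a n) P = u n + ereal (\<theta> n * dP P (Ps n))" for n
      using hx(2) by (simp add: phi_seq_def u_def iota_def)
    have I_eq: "enn2ereal (I n) = ereal c - u n" for n
      unfolding I_def u_def c_def
      by (rule Eext_dom[OF Pp fsm gi]) (use g0 gae in \<open>auto elim!: eventually_mono\<close>)
    have Fle: "AE \<xi> in P. f \<xi> x \<le> ereal (g \<xi>)"
      using gae
    proof eventually_elim
      case (elim \<xi>)
      then show ?case by (intro LIMSEQ_le_const2[of "\<lambda>\<nu>. fs \<nu> \<xi> (a \<nu>)"]) auto
    qed
    have IF_eq: "enn2ereal (\<integral>\<^sup>+\<xi>. e2ennreal (ereal (g \<xi>) - f \<xi> x) \<partial>P) = ereal c - Eext P (\<lambda>\<xi>. f \<xi> x)"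
      unfolding c_def by (rule Eext_dom[OF Pp Fm gi]) (use g0 Fle in auto)
    have "(\<integral>\<^sup>+\<xi>. e2ennreal (ereal (g \<xi>) - f \<xi> x) \<partial>P)
        = (\<integral>\<^sup>+\<xi>. liminf (\<lambda>n. e2ennreal (ereal (g \<xi>) - fs n \<xi> (a n))) \<partial>P)"
      using gae
    proof (intro nn_integral_cong_AE, eventually_elim)
      case (elim \<xi>)
      then have "(\<lambda>n. - fs n \<xi> (a n)) \<longlonglongrightarrow> - f \<xi> x" by (intro tendsto_uminus_ereal) auto
      then have "(\<lambda>n. ereal (g \<xi>) + - fs n \<xi> (a n)) \<longlonglongrightarrow> ereal (g \<xi>) + - f \<xi> x"
        by (intro tendsto_add_ereal_general) auto
      then have "(\<lambda>n. e2ennreal (ereal (g \<xi>) - fs n \<xi> (a n))) \<longlonglongrightarrow> e2ennreal (ereal (g \<xi>) - f \<xi> x)"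
        by (intro tendsto_e2ennrealI) (simp add: minus_ereal_def)
      then show ?case by (simp add: lim_imp_Liminf)
    qed
    also have "\<dots> \<le> liminf I"
      unfolding I_def by (rule nn_integral_liminf) (use fsm in measurable)
    finally have "enn2ereal (\<integral>\<^sup>+\<xi>. e2ennreal (ereal (g \<xi>) - f \<xi> x) \<partial>P) \<le> enn2ereal (liminf I)"
      by (simp add: less_eq_ennreal.rep_eq)
    also have "enn2ereal (liminf I) = liminf (\<lambda>n. enn2ereal (I n))"
      by (rule Liminf_compose_continuous_mono[symmetric])
         (auto simp: continuous_on_enn2ereal mono_def less_eq_ennreal.rep_eq)
    also have "\<dots> = liminf (\<lambda>n. ereal c - u n)" by (simp add: I_eq)
    also have "\<dots> = ereal c - limsup u" by (rule liminf_ereal_cminus) simp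
    finally have "ereal c - Eext P (\<lambda>\<xi>. f \<xi> x) \<le> ereal c - limsup u" unfolding IF_eq .
    then have lu: "limsup u \<le> Eext P (\<lambda>\<xi>. f \<xi> x)" by (rule ereal_cancel_arith)
    have "(\<lambda>n. \<theta> n * dP P (Ps n)) \<longlonglongrightarrow> 0"
      using \<theta>_dist by (simp add: PPm.commute[of P])
    then have "(\<lambda>n. ereal (\<theta> n * dP P (Ps n))) \<longlonglongrightarrow> ereal 0" by (rule tendsto_ereal)
    then have l0: "limsup (\<lambda>n. ereal (\<theta> n * dP P (Ps n))) = 0" by (simp add: lim_imp_Limsup zero_ereal_def)
    have "limsup (\<lambda>n. phi_seq fs Xs Ps \<theta> dP n (a n) P) \<le> limsup u + limsup (\<lambda>n. ereal (\<theta> n * dP P (Ps n)))"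
      unfolding eqn by (rule ereal_limsup_add_mono)
    then show ?thesis using lu l0 by simp
  qed
  have phi_P: "phi_lim f X P x P = Eext P (\<lambda>\<xi>. f \<xi> x)" if "x \<in> X" for x
    using that by (simp add: phi_lim_def iota_def)
  have const_conv: "seq_conv dP (\<lambda>n. Q) Q" if "Q \<in> PP" for Q
    using that by (simp add: seq_conv_def)
  have const_convX: "seq_conv dX (\<lambda>n. x) x" if "x \<in> XX" for x
    using that by (simp add: seq_conv_def)
  show ?thesis
    unfolding epi_conv_def
  proof (intro ballI conjI allI impI)
    fix x Q xs Qs
    assume x: "x \<in> XX" and Q: "Q \<in> PP"
      and h: "(\<forall>n. xs n \<in> XX \<and> Qs n \<in> PP) \<and> seq_conv dX xs x \<and> seq_conv dP Qs Q"
    show "phi_lim f X P x Q \<le> liminf (\<lambda>n. phi_seq fs Xs Ps \<theta> dP n (xs n) (Qs n))"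
    proof (cases "Q = P \<and> x \<in> X")
      case True
      then show ?thesis using main_liminf[of x xs Qs] h phi_P[of x] by auto
    next
      case False
      then have "(\<lambda>n. phi_seq fs Xs Ps \<theta> dP n (xs n) (Qs n)) \<longlonglongrightarrow> \<infinity>"
        using seq_inf[of x xs Qs Q] x Q h by auto
      then have "liminf (\<lambda>n. phi_seq fs Xs Ps \<theta> dP n (xs n) (Qs n)) = \<infinity>"
        by (simp add: lim_imp_Liminf)
      then show ?thesis by simp
    qed
  next
    fix x Q
    assume x: "x \<in> XX" and Q: "Q \<in> PP"
    show "\<exists>xs Qs. (\<forall>n. xs n \<in> XX \<and> Qs n \<in> PP) \<and> seq_conv dX xs x \<and> seq_conv dP Qs Q \<and>
            (\<lambda>n. phi_seq fs Xs Ps \<theta> dP n (xs n) (Qs n)) \<longlonglongrightarrow> phi_lim f X P x Q"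
    proof (cases "x \<in> X")
      case True
      then obtain a where a: "\<forall>n. a n \<in> Xs n" "seq_conv dX a x" using inner by blast
      have aXX: "\<forall>n. a n \<in> XX" using a Xs_sub by blast
      show ?thesis
      proof (intro exI conjI)
        show "\<forall>n. a n \<in> XX \<and> Q \<in> PP" using aXX Q by simp
        show "seq_conv dX a x" by fact
        show "seq_conv dP (\<lambda>n. Q) Q" using const_conv Q by simp
        show "(\<lambda>n. phi_seq fs Xs Ps \<theta> dP n (a n) Q) \<longlonglongrightarrow> phi_lim f X P x Q"
        proof (cases "Q = P")
          case True
          have li: "Eext P (\<lambda>\<xi>. f \<xi> x) \<le> liminf (\<lambda>n. phi_seq fs Xs Ps \<theta> dP n (a n) P)"
            using main_liminf[of x a "\<lambda>n. P"] \<open>x \<in> X\<close> aXX a P_in const_conv by auto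
          have ls: "limsup (\<lambda>n. phi_seq fs Xs Ps \<theta> dP n (a n) P) \<le> Eext P (\<lambda>\<xi>. f \<xi> x)"
            using main_limsup[of x a] \<open>x \<in> X\<close> a by auto
          have "(\<lambda>n. phi_seq fs Xs Ps \<theta> dP n (a n) P) \<longlonglongrightarrow> Eext P (\<lambda>\<xi>. f \<xi> x)"
            using li ls Liminf_le_Limsup[of sequentially "\<lambda>n. phi_seq fs Xs Ps \<theta> dP n (a n) P"]
            by (intro Liminf_eq_Limsup) auto
          then show ?thesis using True phi_P[OF \<open>x \<in> X\<close>] by simp
        next
          case False
          then show ?thesis
            using seq_inf[of x a "\<lambda>n. Q" Q] phi_inf[of Q x] x aXX a Q const_conv by auto
        qed
      qed
    next
      case False
      show ?thesis
      proof (intro exI conjI)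
        show "\<forall>n. x \<in> XX \<and> Q \<in> PP" using x Q by simp
        show "seq_conv dX (\<lambda>n. x) x" using const_convX x by simp
        show "seq_conv dP (\<lambda>n. Q) Q" using const_conv Q by simp
        show "(\<lambda>n. phi_seq fs Xs Ps \<theta> dP n x Q) \<longlonglongrightarrow> phi_lim f X P x Q"
          using seq_inf[of x "\<lambda>n. x" "\<lambda>n. Q" Q] phi_inf[of Q x] x Q const_conv const_convX False by auto
      qed
    qed
  qed
qed

end
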